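(* For all integers $m\ge1$ and $n\ge1$, $$\sum_{k=1}^n k\binom{m+k-1}{k}^{-1}\binom{2m+k-1}{k}=\frac{[n(m+1)-m+1](m+n)}{(m+1)(m+2)}\binom{m+n}{n+1}^{-1}\binom{2m+n}{n+1}+\frac{2m(m-1)}{(m+1)(m+2)}.$$ *)

theory Defs
  imports Complex_Main
begin

end

theory Submission
  imports Defs
begin
lemma Tstep:
  fixes m k :: nat
  assumes "m \<ge> 1"
  shows "real ((2*m+Suc k-1) choose Suc k) / real ((m+Suc k-1) choose Suc k)
       = real ((2*m+k-1) choose k) / real ((m+k-1) choose k) * (2*m+k) / (m+k)"
proof -
  obtain p where p: "m = Suc p" using assms by (cases m) auto
  have e1: "2*m+Suc k-1 = Suc (2*p+k+1)" and e2: "m+Suc k-1 = Suc (p+k)"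
   and e3: "2*m+k-1 = 2*p+k+1" and e4: "m+k-1 = p+k" using p by auto
  have a: "real (Suc (2*p+k+1)) * real ((2*p+k+1) choose k) = real (Suc (2*p+k+1) choose Suc k) * (k+1)"
    using Suc_times_binomial_eq[of "2*p+k+1" k] by (simp only: of_nat_mult[symmetric]) simp
  have b: "real (Suc (p+k)) * real ((p+k) choose k) = real (Suc (p+k) choose Suc k) * (k+1)"
    using Suc_times_binomial_eq[of "p+k" k] by (simp only: of_nat_mult[symmetric]) simp
  have nz: "real ((p+k) choose k) \<noteq> 0" by simp
  have x: "real (Suc (2*p+k+1) choose Suc k) = real (Suc (2*p+k+1)) * real ((2*p+k+1) choose k) / (k+1)"
    using a by (simp add: field_simps)
  have y: "real (Suc (p+k) choose Suc k) = real (Suc (p+k)) * real ((p+k) choose k) / (k+1)"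
    using b by (simp add: field_simps)
  have g: "\<And>A B N M K::real. B \<noteq> 0 \<Longrightarrow> K > 0 \<Longrightarrow> M > 0 \<Longrightarrow> (N*A/K)/(M*B/K) = A/B*N/M"
    by (simp add: field_simps)
  have "real (Suc (2*p+k+1)) = real (2*m+k)" "real (Suc (p+k)) = real (m+k)" using p by auto
  then show ?thesis unfolding e1 e2 e3 e4 x y using nz g[of "real ((p+k) choose k)" "real (k+1)" "real (m+k)"] p
    by simp
qed

lemma alg:
  fixes x y T c :: real
  assumes "x \<ge> 0" "y \<ge> 0"
  shows "(y*(x+1) - x + 1)*(x+y)/((x+1)*(x+2))*T + c + (y+1)*T
     = ((y+1)*(x+1) - x + 1)*(x+(y+1))/((x+1)*(x+2)) * (T*(2*x+(y+1))/(x+(y+1))) + c"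
proof -
  have p: "(y*(x+1)-x+1)*(x+y) + (y+1)*((x+1)*(x+2)) = ((y+1)*(x+1)-x+1)*(2*x+y+1)"
    by (simp add: algebra_simps)
  have d1: "(x+1)*(x+2) > 0" using assms by simp
  have d2: "x+(y+1) > 0" using assms by simp
  have "(y*(x+1) - x + 1)*(x+y)/((x+1)*(x+2))*T + (y+1)*T
      = ((y*(x+1)-x+1)*(x+y) + (y+1)*((x+1)*(x+2))) / ((x+1)*(x+2)) * T"
    using d1 by (simp add: field_simps)
  also have "\<dots> = ((y+1)*(x+1)-x+1)*(2*x+y+1) / ((x+1)*(x+2)) * T" unfolding p ..
  also have "\<dots> = ((y+1)*(x+1) - x + 1)*(x+(y+1))/((x+1)*(x+2)) * (T*(2*x+(y+1))/(x+(y+1)))"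
  proof -
    have g: "\<And>a b D T M::real. b \<noteq> 0 \<Longrightarrow> a*b/D*(T*M/b) = a*M/D*T" by simp
    have "2*x+(y+1) = 2*x+y+1" by simp
    then show ?thesis using g[of "x+(y+1)" "(y+1)*(x+1)-x+1" "(x+1)*(x+2)" T "2*x+(y+1)"] d2 by simp
  qed
  finally show ?thesis by simp
qed

lemma gen:
  fixes m n :: nat
  assumes "m \<ge> 1"
  shows "(\<Sum>k=1..n. real k * real ((2*m+k-1) choose k) / real ((m+k-1) choose k))
    = (real n * (real m + 1) - real m + 1) * (real m + real n) / ((real m + 1) * (real m + 2))
        * real ((2*m+n) choose (n+1)) / real ((m+n) choose (n+1))
      + 2 * real m * (real m - 1) / ((real m + 1) * (real m + 2))"
proof (induction n)
  case 0
  have "real ((2*m) choose 1) / real (m choose 1) = 2" using assms by simp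
  have r: "real ((2*m+0) choose (0+1)) / real ((m+0) choose (0+1)) = 2" using assms by simp
  have D: "(real m + 1) * (real m + 2) > 0" by simp
  have "(real 0 * (real m + 1) - real m + 1) * (real m + real 0) / ((real m + 1) * (real m + 2))
        * real ((2*m+0) choose (0+1)) / real ((m+0) choose (0+1))
      + 2 * real m * (real m - 1) / ((real m + 1) * (real m + 2))
     = (1 - real m) * real m / ((real m + 1) * (real m + 2)) * 2
      + 2 * real m * (real m - 1) / ((real m + 1) * (real m + 2))"
    unfolding times_divide_eq_right[symmetric] r by simp
  also have "\<dots> = 0" using D by (simp add: field_simps)
  finally show ?case by simp
next
  case (Suc n)
  define T where "T = real ((2*m+n) choose (n+1)) / real ((m+n) choose (n+1))"
  have t1: "real ((2*m+Suc n-1) choose Suc n) / real ((m+Suc n-1) choose Suc n) = T"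
    unfolding T_def by simp
  have t2: "real ((2*m+Suc n) choose (Suc n+1)) / real ((m+Suc n) choose (Suc n+1)) = T * (2*m+Suc n)/(m+Suc n)"
    using Tstep[OF assms, of "Suc n"] unfolding T_def by simp
  have "(\<Sum>k=1..Suc n. real k * real ((2*m+k-1) choose k) / real ((m+k-1) choose k))
     = (real n * (real m + 1) - real m + 1) * (real m + real n) / ((real m + 1) * (real m + 2)) * T
      + 2 * real m * (real m - 1) / ((real m + 1) * (real m + 2)) + real (Suc n) * T"
    using Suc t1 unfolding T_def by (simp add: field_simps)
  also have "\<dots> = (real (Suc n) * (real m + 1) - real m + 1) * (real m + real (Suc n)) / ((real m + 1) * (real m + 2))
        * (T * (2*m+Suc n)/(m+Suc n))
      + 2 * real m * (real m - 1) / ((real m + 1) * (real m + 2))"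
    using alg[of "real m" "real n" T "2 * real m * (real m - 1) / ((real m + 1) * (real m + 2))"]
    by (simp add: add_ac)
  finally show ?case using t2
    by (metis (no_types, lifting) times_divide_eq_right)
qed

theorem mainTheorem11:
  fixes m n :: nat
  assumes "m \<ge> 1" and "n \<ge> 1"
  shows "(\<Sum>k=1..n. real k * real ((2*m+k-1) choose k) / real ((m+k-1) choose k))
    = (real n * (real m + 1) - real m + 1) * (real m + real n) / ((real m + 1) * (real m + 2))
        * real ((2*m+n) choose (n+1)) / real ((m+n) choose (n+1))
      + 2 * real m * (real m - 1) / ((real m + 1) * (real m + 2))"
  using gen[OF assms(1)] .

end
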